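(* Let $\mathcal{G}\leq\mathrm{Homeo}(M)$ be locally approximating. Let $U$ be a regular open subset of $M$ that is compactly contained in a single chart of $M$, and let $V\subseteq U$ be compactly contained in $U$. Then there is $W\in\mathcal{D}_{\mathcal{G}}$ with $W\subseteq U$ such that $V$ is compactly contained in $W$.
   Context: $M$ is a compact, connected topological manifold of positive dimension, possibly with boundary; $\mathrm{Homeo}(M)$ has the compact-open topology; $\mathcal{G}[U]$ is the subgroup of elements of $\mathcal{G}$ acting as the identity on $M\setminus U$. $\mathcal{G}$ is locally approximating if: (1) for every open $U$ with compact closure in a single Euclidean chart and not accumulating on $\partial M$, $\mathcal{G}[U]$ is dense in $\mathrm{Homeo}(M)[U]$; and (2) if $\partial M\neq\emptyset$, either (a) $\mathcal{G}$ consists of compactly supported homeomorphisms of $M\setminus\partial M$, or (b) for every open $U$ with compact closure in a single Euclidean chart, $\mathcal{G}[U]$ is dense in $\mathrm{Homeo}(M)[U]$. A regular open set is an open set equal to the interior of its closure. The extended support $\mathrm{supp}^e g$ is the interior of the closure of $\{x:g(x)\neq x\}$, and $\mathcal{D}_{\mathcal{G}}=\{\mathrm{supp}^e g: g\in\mathcal{G}\}$. A collared ball in $M$ is the image of an embedding of the closed unit ball of $\mathbb{R}^{\dim M}$ extending to an embedding of the radius-$2$ ball; $A$ is compactly contained in $B$ if $A$ is contained in a collared ball contained in the interior of $B$. *)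

theory Defs
  imports "HOL-Analysis.Analysis"
begin

text \<open>Closed half-space H^n inside Euclidean n-space (points nat => real vanishing from index n on).\<close>
definition half_space :: "nat \<Rightarrow> (nat \<Rightarrow> real) topology" where
  "half_space n = subtopology (Euclidean_space n) {x. 0 \<le> x 0}"

definition eball :: "nat \<Rightarrow> real \<Rightarrow> (nat \<Rightarrow> real) set" where
  "eball n r = {x \<in> topspace (Euclidean_space n). (\<Sum>i<n. (x i)\<^sup>2) \<le> r\<^sup>2}"

definition is_chart :: "'a topology \<Rightarrow> nat \<Rightarrow> 'a set \<Rightarrow> ('a \<Rightarrow> nat \<Rightarrow> real) \<Rightarrow> bool" where
  "is_chart M n C \<phi> \<longleftrightarrow> openin M C \<and>
     (\<exists>W. openin (half_space n) W \<and> homeomorphic_map (subtopology M C) (subtopology (half_space n) W) \<phi>)"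

definition chart_domain :: "'a topology \<Rightarrow> nat \<Rightarrow> 'a set \<Rightarrow> bool" where
  "chart_domain M n C \<longleftrightarrow> (\<exists>\<phi>. is_chart M n C \<phi>)"

definition topological_manifold :: "'a topology \<Rightarrow> nat \<Rightarrow> bool" where
  "topological_manifold M n \<longleftrightarrow> Hausdorff_space M \<and> second_countable M \<and>
     (\<forall>p\<in>topspace M. \<exists>C. chart_domain M n C \<and> p \<in> C)"

definition mboundary :: "'a topology \<Rightarrow> nat \<Rightarrow> 'a set" where
  "mboundary M n = {p \<in> topspace M. \<exists>C \<phi>. is_chart M n C \<phi> \<and> p \<in> C \<and> \<phi> p 0 = 0}"

definition collared_ball :: "'a topology \<Rightarrow> nat \<Rightarrow> 'a set \<Rightarrow> bool" where
  "collared_ball M n B \<longleftrightarrow>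
     (\<exists>e. embedding_map (subtopology (Euclidean_space n) (eball n 2)) M e \<and> B = e ` eball n 1)"

definition compactly_contained :: "'a topology \<Rightarrow> nat \<Rightarrow> 'a set \<Rightarrow> 'a set \<Rightarrow> bool" where
  "compactly_contained M n A B \<longleftrightarrow>
     (\<exists>D. collared_ball M n D \<and> A \<subseteq> D \<and> D \<subseteq> M interior_of B)"

definition regular_open :: "'a topology \<Rightarrow> 'a set \<Rightarrow> bool" where
  "regular_open M U \<longleftrightarrow> openin M U \<and> M interior_of (M closure_of U) = U"

definition Homeo :: "'a topology \<Rightarrow> ('a \<Rightarrow> 'a) set" where
  "Homeo M = {f. homeomorphic_map M M f \<and> (\<forall>x. x \<notin> topspace M \<longrightarrow> f x = x)}"

definition homeo_inv :: "'a topology \<Rightarrow> ('a \<Rightarrow> 'a) \<Rightarrow> 'a \<Rightarrow> 'a" where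
  "homeo_inv M f = (\<lambda>x. if x \<in> topspace M then inv_into (topspace M) f x else x)"

definition homeo_subgroup :: "'a topology \<Rightarrow> ('a \<Rightarrow> 'a) set \<Rightarrow> bool" where
  "homeo_subgroup M G \<longleftrightarrow> G \<subseteq> Homeo M \<and> id \<in> G \<and>
     (\<forall>f\<in>G. \<forall>g\<in>G. f \<circ> g \<in> G) \<and> (\<forall>f\<in>G. homeo_inv M f \<in> G)"

definition rel_supp :: "'a topology \<Rightarrow> ('a \<Rightarrow> 'a) set \<Rightarrow> 'a set \<Rightarrow> ('a \<Rightarrow> 'a) set" where
  "rel_supp M G U = {g\<in>G. \<forall>x\<in>topspace M - U. g x = x}"

text \<open>A is dense in B w.r.t. the compact-open topology (subbasic sets {f. f ` K \<subseteq> Ob},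
  K compact, O open): every basic neighbourhood of a point of B meets A.\<close>
definition co_dense :: "'a topology \<Rightarrow> ('a \<Rightarrow> 'a) set \<Rightarrow> ('a \<Rightarrow> 'a) set \<Rightarrow> bool" where
  "co_dense M A B \<longleftrightarrow>
     (\<forall>f\<in>B. \<forall>F. finite F \<and> (\<forall>(K,Ob)\<in>F. compactin M K \<and> openin M Ob \<and> f ` K \<subseteq> Ob) \<longrightarrow>
        (\<exists>g\<in>A. \<forall>(K,Ob)\<in>F. g ` K \<subseteq> Ob))"

definition in_single_chart :: "'a topology \<Rightarrow> nat \<Rightarrow> 'a set \<Rightarrow> bool" where
  "in_single_chart M n S \<longleftrightarrow> (\<exists>C. chart_domain M n C \<and> S \<subseteq> C)"

definition locally_approximating :: "'a topology \<Rightarrow> nat \<Rightarrow> ('a \<Rightarrow> 'a) set \<Rightarrow> bool" where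
  "locally_approximating M n G \<longleftrightarrow>
     (\<forall>U. openin M U \<and> compactin M (M closure_of U) \<and> in_single_chart M n (M closure_of U)
          \<and> M closure_of U \<inter> mboundary M n = {}
          \<longrightarrow> co_dense M (rel_supp M G U) (rel_supp M (Homeo M) U)) \<and>
     (mboundary M n \<noteq> {} \<longrightarrow>
        (\<forall>g\<in>G. \<exists>K. compactin (subtopology M (topspace M - mboundary M n)) K \<and>
                    {x\<in>topspace M. g x \<noteq> x} \<subseteq> K)
      \<or> (\<forall>U. openin M U \<and> compactin M (M closure_of U) \<and> in_single_chart M n (M closure_of U)
          \<longrightarrow> co_dense M (rel_supp M G U) (rel_supp M (Homeo M) U)))"

definition ext_supp :: "'a topology \<Rightarrow> ('a \<Rightarrow> 'a) \<Rightarrow> 'a set" where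
  "ext_supp M g = M interior_of (M closure_of {x\<in>topspace M. g x \<noteq> x})"

definition D_set :: "'a topology \<Rightarrow> ('a \<Rightarrow> 'a) set \<Rightarrow> 'a set set" where
  "D_set M G = ext_supp M ` G"

end

theory Submission
  imports Defs "HOL-Homology.Invariance_of_Domain"
begin

definition sqn :: "nat \<Rightarrow> (nat \<Rightarrow> real) \<Rightarrow> real" where
  "sqn n x = (\<Sum>i<n. (x i)\<^sup>2)"

definition oball :: "nat \<Rightarrow> real \<Rightarrow> (nat \<Rightarrow> real) set" where
  "oball n r = {x \<in> topspace (Euclidean_space n). sqn n x < r\<^sup>2}"

lemma cm_coord: "continuous_map (Euclidean_space n) euclideanreal (\<lambda>x. x i)"
  unfolding Euclidean_space_def
  by (rule continuous_map_from_subtopology) (metis UNIV_I continuous_map_product_coordinates)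

lemma cm_sqn: "continuous_map (Euclidean_space n) euclideanreal (sqn n)"
  unfolding sqn_def by (intro continuous_intros cm_coord) simp

lemma eball_sqn: "eball n r = {x \<in> topspace (Euclidean_space n). sqn n x \<le> r\<^sup>2}"
  by (simp add: eball_def sqn_def)

lemma openin_oball: "openin (Euclidean_space n) (oball n r)"
proof -
  have "openin (Euclidean_space n) {x \<in> topspace (Euclidean_space n). sqn n x \<in> {..<r\<^sup>2}}"
    by (rule openin_continuous_map_preimage[OF cm_sqn]) auto
  then show ?thesis by (simp add: oball_def)
qed

lemma closedin_eball: "closedin (Euclidean_space n) (eball n r)"
proof -
  have "closedin (Euclidean_space n) {x \<in> topspace (Euclidean_space n). sqn n x \<in> {..r\<^sup>2}}"
    by (rule closedin_continuous_map_preimage[OF cm_sqn]) auto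
  then show ?thesis by (simp add: eball_sqn)
qed

lemma compactin_eball: 
  assumes "r \<ge> 0" shows "compactin (Euclidean_space n) (eball n r)"
proof -
  let ?S = "\<lambda>i. if i < n then {-r..r} else {0::real}"
  have c: "compactin (powertop_real UNIV) (PiE UNIV ?S)"
    by (subst compactin_PiE) auto
  have sub: "eball n r \<subseteq> PiE UNIV ?S"
  proof
    fix x assume x: "x \<in> eball n r"
    have "x i \<in> {-r..r}" if "i < n" for i
    proof -
      have "(x i)\<^sup>2 \<le> (\<Sum>j<n. (x j)\<^sup>2)"
        by (rule member_le_sum) (use that in auto)
      also have "\<dots> \<le> r\<^sup>2" using x by (simp add: eball_def)
      finally have "\<bar>x i\<bar> \<le> r" using power2_le_imp_le[of "\<bar>x i\<bar>" r] assms by simp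
      then show ?thesis by (simp add: abs_le_iff)
    qed
    moreover have "x i = 0" if "\<not> i < n" for i using x that by (auto simp: eball_def topspace_Euclidean_space)
    ultimately have "x i \<in> ?S i" for i by (cases "i < n") simp_all
    then show "x \<in> PiE UNIV ?S" by (simp add: PiE_iff)
  qed
  have "compactin (powertop_real UNIV) (eball n r)"
  proof (rule closed_compactin[OF c sub])
    have "closedin (Euclidean_space n) (eball n r)" by (rule closedin_eball)
    then have "closedin (subtopology (powertop_real UNIV) (topspace (Euclidean_space n))) (eball n r)"
      by (simp add: Euclidean_space_def topspace_Euclidean_space)
    then show "closedin (powertop_real UNIV) (eball n r)"
      using closedin_Euclidean_space closedin_trans_full by blast
  qed
  then show ?thesis
    by (auto simp: Euclidean_space_def compactin_subtopology eball_def topspace_Euclidean_space)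
qed

lemma emb_cont: 
  assumes "embedding_map X M e" shows "continuous_map X M e"
proof -
  have "continuous_map X (subtopology M (e ` topspace X)) e"
    using assms unfolding embedding_map_def by (rule homeomorphic_imp_continuous_map)
  then show ?thesis by (rule continuous_map_into_fulltopology)
qed

lemma topspace_eball: "topspace (subtopology (Euclidean_space n) (eball n r)) = eball n r"
  by (auto simp: eball_def)

lemma emb_inj: 
  assumes "embedding_map (subtopology (Euclidean_space n) (eball n r)) M e" shows "inj_on e (eball n r)"
proof -
  have "inj_on e (topspace (subtopology (Euclidean_space n) (eball n r)))"
    using assms unfolding embedding_map_def by (rule homeomorphic_imp_injective_map)
  then show ?thesis by (simp only: topspace_eball)
qed

lemma chart_cont:
  assumes "homeomorphic_map (subtopology M C) (subtopology (half_space n) W) \<phi>"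
  shows "continuous_map (subtopology M C) (Euclidean_space n) \<phi>"
proof -
  have "continuous_map (subtopology M C) (subtopology (half_space n) W) \<phi>"
    using assms by (rule homeomorphic_imp_continuous_map)
  then have "continuous_map (subtopology M C) (half_space n) \<phi>"
    by (rule continuous_map_into_fulltopology)
  then have "continuous_map (subtopology M C) (subtopology (Euclidean_space n) {x. 0 \<le> x 0}) \<phi>"
    by (simp only: half_space_def)
  then show ?thesis by (rule continuous_map_into_fulltopology)
qed

lemma oball_sub: 
  assumes "0 \<le> \<rho>" "\<rho> \<le> r" shows "oball n \<rho> \<subseteq> eball n r"
proof
  fix x assume x: "x \<in> oball n \<rho>"
  have "\<rho>\<^sup>2 \<le> r\<^sup>2" using assms by (simp add: power_mono)
  moreover have "sqn n x < \<rho>\<^sup>2" "x \<in> topspace (Euclidean_space n)" using x by (auto simp: oball_def)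
  ultimately show "x \<in> eball n r" unfolding eball_sqn by auto
qed

lemma eball_mono: 
  assumes "0 \<le> \<rho>" "\<rho> \<le> r" shows "eball n \<rho> \<subseteq> eball n r"
proof
  fix x assume x: "x \<in> eball n \<rho>"
  have "\<rho>\<^sup>2 \<le> r\<^sup>2" using assms by (simp add: power_mono)
  moreover have "sqn n x \<le> \<rho>\<^sup>2" "x \<in> topspace (Euclidean_space n)" using x by (auto simp: eball_sqn)
  ultimately show "x \<in> eball n r" unfolding eball_sqn by auto
qed

lemma eball_oball: 
  assumes "0 \<le> \<rho>" "\<rho> < r" shows "eball n \<rho> \<subseteq> oball n r"
proof
  fix x assume x: "x \<in> eball n \<rho>"
  have "\<rho>\<^sup>2 < r\<^sup>2" using assms by (simp add: power_strict_mono)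
  moreover have "sqn n x \<le> \<rho>\<^sup>2" "x \<in> topspace (Euclidean_space n)" using x by (auto simp: eball_sqn)
  ultimately show "x \<in> oball n r" unfolding oball_def by auto
qed

lemma chart_image_open:
  assumes chart: "is_chart M n C \<phi>"
    and emb: "embedding_map (subtopology (Euclidean_space n) (eball n 2)) M e"
    and N: "openin (Euclidean_space n) N" "N \<subseteq> eball n 2" "e ` N \<subseteq> C"
  shows "openin (Euclidean_space n) (\<phi> ` e ` N) \<and> openin M (e ` N)"
proof -
  obtain W where W: "openin (half_space n) W"
    and hm: "homeomorphic_map (subtopology M C) (subtopology (half_space n) W) \<phi>"
    and C: "openin M C"
    using chart by (auto simp: is_chart_def)
  have c\<phi>: "continuous_map (subtopology M C) (Euclidean_space n) \<phi>"
    using chart_cont[OF hm] .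
  have ce0: "continuous_map (subtopology (Euclidean_space n) (eball n 2)) M e"
    using emb_cont[OF emb] .
  have ce1: "continuous_map (subtopology (Euclidean_space n) N) M e"
    using continuous_map_from_subtopology_mono[OF ce0 N(2)] .
  have ce: "continuous_map (subtopology (Euclidean_space n) N) (subtopology M C) e"
    using ce1 N(3) by (simp add: continuous_map_in_subtopology image_subset_iff)
  have ie: "inj_on e (eball n 2)" using emb_inj[OF emb] .
  have CM: "C \<subseteq> topspace M" using C openin_subset by blast
  have i\<phi>: "inj_on \<phi> C"
    using homeomorphic_imp_injective_map[OF hm] CM by (simp add: Int_absorb1 topspace_subtopology)
  have "openin (Euclidean_space n) ((\<phi> \<circ> e) ` N)"
  proof (rule invariance_of_domain_Euclidean_space[OF N(1)])
    show "continuous_map (subtopology (Euclidean_space n) N) (Euclidean_space n) (\<phi> \<circ> e)"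
      using continuous_map_compose[OF ce c\<phi>] .
    show "inj_on (\<phi> \<circ> e) N"
      using comp_inj_on[OF inj_on_subset[OF ie N(2)] inj_on_subset[OF i\<phi> N(3)]] .
  qed
  then have o1: "openin (Euclidean_space n) (\<phi> ` e ` N)" by (simp add: image_comp)
  have eNM: "e ` N \<subseteq> topspace M"
    using N(3) CM by blast
  have eq: "e ` N = {p \<in> topspace (subtopology M C). \<phi> p \<in> \<phi> ` e ` N}"
  proof
    show "e ` N \<subseteq> {p \<in> topspace (subtopology M C). \<phi> p \<in> \<phi> ` e ` N}"
    proof (rule subsetI)
      fix p assume "p \<in> e ` N"
      then have "p \<in> topspace (subtopology M C)" using eNM N(3) by (auto simp: topspace_subtopology)
      then show "p \<in> {p \<in> topspace (subtopology M C). \<phi> p \<in> \<phi> ` e ` N}"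
        using \<open>p \<in> e ` N\<close> by blast
    qed
    show "{p \<in> topspace (subtopology M C). \<phi> p \<in> \<phi> ` e ` N} \<subseteq> e ` N"
    proof (rule subsetI)
      fix p assume "p \<in> {p \<in> topspace (subtopology M C). \<phi> p \<in> \<phi> ` e ` N}"
      then have p: "p \<in> topspace (subtopology M C)" "\<phi> p \<in> \<phi> ` e ` N" by auto
      then obtain x where x: "x \<in> N" "\<phi> p = \<phi> (e x)" by auto
      have "p \<in> C" using p(1) by (simp add: topspace_subtopology)
      moreover have "e x \<in> C" using x N(3) by auto
      ultimately have "p = e x" using inj_onD[OF i\<phi> x(2)] by blast
      then show "p \<in> e ` N" using x by auto
    qed
  qed
  have "openin (subtopology M C) {p \<in> topspace (subtopology M C). \<phi> p \<in> \<phi> ` e ` N}"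
    using openin_continuous_map_preimage[OF c\<phi> o1] .
  then have "openin (subtopology M C) (e ` N)" by (simp only: eq[symmetric])
  then have "openin M (e ` N)" using C openin_trans_full by blast
  then show ?thesis using o1 by blast
qed

lemma local_N:
  assumes emb: "embedding_map (subtopology (Euclidean_space n) (eball n 2)) M e"
    and C: "openin M C" and x: "x \<in> oball n \<rho>" "e x \<in> C" and \<rho>: "0 \<le> \<rho>" "\<rho> \<le> 2"
  shows "\<exists>N. openin (Euclidean_space n) N \<and> x \<in> N \<and> N \<subseteq> oball n \<rho> \<and> e ` N \<subseteq> C"
proof -
  have ce0: "continuous_map (subtopology (Euclidean_space n) (eball n 2)) M e"
    using emb_cont[OF emb] .
  have "openin (subtopology (Euclidean_space n) (eball n 2))
          {y \<in> topspace (subtopology (Euclidean_space n) (eball n 2)). e y \<in> C}"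
    using openin_continuous_map_preimage[OF ce0 C] .
  then obtain T where T: "openin (Euclidean_space n) T"
    and eqT: "{y \<in> topspace (subtopology (Euclidean_space n) (eball n 2)). e y \<in> C} = T \<inter> eball n 2"
    by (auto simp: openin_subtopology)
  have sub: "oball n \<rho> \<subseteq> eball n 2" using oball_sub \<rho> by blast
  show ?thesis
  proof (intro exI conjI)
    show "openin (Euclidean_space n) (T \<inter> oball n \<rho>)" using T openin_oball by blast
    show "x \<in> T \<inter> oball n \<rho>" using x sub eqT topspace_eball by blast
    show "T \<inter> oball n \<rho> \<subseteq> oball n \<rho>" by blast
    show "e ` (T \<inter> oball n \<rho>) \<subseteq> C"
    proof clarify
      fix y assume "y \<in> T" "y \<in> oball n \<rho>"
      then have "y \<in> T \<inter> eball n 2" using sub by blast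
      then show "e y \<in> C" using eqT by blast
    qed
  qed
qed

lemma open_image_oball:
  assumes man: "topological_manifold M n"
    and emb: "embedding_map (subtopology (Euclidean_space n) (eball n 2)) M e"
    and \<rho>: "0 \<le> \<rho>" "\<rho> \<le> 2"
  shows "openin M (e ` oball n \<rho>)"
proof (subst openin_subopen, intro ballI)
  fix p assume "p \<in> e ` oball n \<rho>"
  then obtain x where x: "x \<in> oball n \<rho>" "p = e x" by auto
  have "x \<in> eball n 2" using x oball_sub \<rho> by blast
  moreover have "e ` eball n 2 \<subseteq> topspace M"
    using continuous_map_image_subset_topspace[OF emb_cont[OF emb]] topspace_eball by metis
  ultimately have "p \<in> topspace M" using x by blast
  then obtain C where "chart_domain M n C" "p \<in> C" using man by (auto simp: topological_manifold_def)
  then obtain \<phi> where ch: "is_chart M n C \<phi>" by (auto simp: chart_domain_def)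
  then have C: "openin M C" by (simp add: is_chart_def)
  obtain N where N: "openin (Euclidean_space n) N" "x \<in> N" "N \<subseteq> oball n \<rho>" "e ` N \<subseteq> C"
    using local_N[OF emb C x(1) _ \<rho>] x \<open>p \<in> C\<close> by blast
  have "N \<subseteq> eball n 2" using N(3) oball_sub \<rho> by blast
  then have "openin M (e ` N)" using chart_image_open[OF ch emb N(1) _ N(4)] by blast
  then show "\<exists>T. openin M T \<and> p \<in> T \<and> T \<subseteq> e ` oball n \<rho>"
    using N x by blast
qed

lemma image_oball_boundary:
  assumes man: "topological_manifold M n" and n: "n \<ge> 1"
    and emb: "embedding_map (subtopology (Euclidean_space n) (eball n 2)) M e"
  shows "e ` oball n 2 \<inter> mboundary M n = {}"
proof (rule ccontr)
  assume "e ` oball n 2 \<inter> mboundary M n \<noteq> {}"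
  then obtain x C \<phi> where x: "x \<in> oball n 2" and ch: "is_chart M n C \<phi>" and xC: "e x \<in> C"
    and y0: "\<phi> (e x) 0 = 0"
    by (auto simp: mboundary_def)
  obtain W where W: "openin (half_space n) W"
    and hm: "homeomorphic_map (subtopology M C) (subtopology (half_space n) W) \<phi>"
    and C: "openin M C"
    using ch by (auto simp: is_chart_def)
  obtain N where N: "openin (Euclidean_space n) N" "x \<in> N" "N \<subseteq> oball n 2" "e ` N \<subseteq> C"
    using local_N[OF emb C x xC] by auto
  have "N \<subseteq> eball n 2" using N(3) oball_sub[of 2 2 n] by simp
  then have So: "openin (Euclidean_space n) (\<phi> ` e ` N)" using chart_image_open[OF ch emb N(1) _ N(4)] by blast
  define y where "y = \<phi> (e x)"
  have yS: "y \<in> \<phi> ` e ` N" using N(2) y_def by blast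
  have CM: "C \<subseteq> topspace M" using C openin_subset by blast
  have "\<phi> ` (topspace (subtopology M C)) \<subseteq> topspace (subtopology (half_space n) W)"
    using hm homeomorphic_imp_continuous_map continuous_map_image_subset_topspace by blast
  moreover have "e ` N \<subseteq> topspace (subtopology M C)" using N(4) CM by auto
  ultimately have "\<phi> ` e ` N \<subseteq> topspace (subtopology (half_space n) W)"
    by blast
  then have Ssub: "\<phi> ` e ` N \<subseteq> topspace (Euclidean_space n) \<inter> {z. 0 \<le> z 0}"
    by (auto simp: half_space_def)
  have yE: "y \<in> topspace (Euclidean_space n)" using yS Ssub by blast
  define p where "p = (\<lambda>t::real. \<lambda>i. if i < n then (if i = 0 then y 0 - t else y i) else 0)"
  have cp: "continuous_map euclideanreal (Euclidean_space n) p"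
    unfolding p_def
    by (subst continuous_map_componentwise_Euclidean_space) (auto intro: continuous_intros)
  have "openin euclideanreal {t \<in> topspace euclideanreal. p t \<in> \<phi> ` e ` N}"
    using openin_continuous_map_preimage[OF cp So] .
  then have op: "open {t. p t \<in> \<phi> ` e ` N}" by simp
  have "p 0 = y" using yE by (auto simp: p_def topspace_Euclidean_space)
  then have "0 \<in> {t. p t \<in> \<phi> ` e ` N}" using yS by simp
  then obtain \<epsilon> where \<epsilon>: "\<epsilon> > 0" "ball 0 \<epsilon> \<subseteq> {t. p t \<in> \<phi> ` e ` N}"
    using op open_contains_ball by blast
  have "\<epsilon>/2 \<in> ball 0 \<epsilon>" using \<epsilon> by (simp add: dist_real_def)
  then have "p (\<epsilon>/2) \<in> \<phi> ` e ` N" using \<epsilon> by blast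
  then have "0 \<le> p (\<epsilon>/2) 0" using Ssub by blast
  moreover have "p (\<epsilon>/2) 0 = - (\<epsilon>/2)" using n y0 by (simp add: p_def y_def)
  ultimately show False using \<epsilon> by simp
qed

definition Lr :: "nat \<Rightarrow> real \<Rightarrow> (nat \<Rightarrow> real) \<Rightarrow> real" where
  "Lr n r x = sqrt (max 0 (r\<^sup>2 - (\<Sum>i\<in>{1..<n}. (x i)\<^sup>2)))"

definition hf :: "nat \<Rightarrow> real \<Rightarrow> (nat \<Rightarrow> real) \<Rightarrow> (nat \<Rightarrow> real)" where
  "hf n r x = x(0 := x 0 + max 0 (min (Lr n r x - x 0) (Lr n r x + x 0)) / 2)"

definition hk :: "nat \<Rightarrow> real \<Rightarrow> (nat \<Rightarrow> real) \<Rightarrow> (nat \<Rightarrow> real)" where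
  "hk n r x = x(0 := x 0 - max 0 (min (Lr n r x - x 0) ((Lr n r x + x 0) / 3)))"

lemma Lr_nonneg: "0 \<le> Lr n r x" by (simp add: Lr_def)

lemma Lr_upd: "Lr n r (x(0 := v)) = Lr n r x"
proof -
  have "(\<Sum>i\<in>{1..<n}. ((x(0 := v)) i)\<^sup>2) = (\<Sum>i\<in>{1..<n}. (x i)\<^sup>2)"
    by (rule sum.cong) auto
  then show ?thesis by (simp add: Lr_def)
qed

lemma sqn_split: "n \<ge> 1 \<Longrightarrow> sqn n x = (x 0)\<^sup>2 + (\<Sum>i\<in>{1..<n}. (x i)\<^sup>2)"
  unfolding sqn_def lessThan_atLeast0
  by (subst sum.atLeast_Suc_lessThan) auto

lemma arith1:
  fixes L t a :: real assumes L0: "0 \<le> L"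
  and a_def: "a = max 0 (min (L - t) (L + t))"
  shows "max 0 (min (L - (t + a/2)) ((L + (t + a/2))/3)) = a/2"
proof -
  consider "L \<le> t" | "t \<le> -L" | "0 \<le> t" "t < L" | "-L < t" "t < 0" by linarith
  then show ?thesis
  proof cases
    case 1
    then have "a = 0" unfolding a_def by simp
    then show ?thesis using 1 by simp
  next
    case 2
    then have "a = 0" unfolding a_def by simp
    moreover have "min (L - t) ((L + t) / 3) \<le> 0" using 2 by (simp add: min_le_iff_disj)
    ultimately show ?thesis by simp
  next
    case 3
    then have a: "a = L - t" unfolding a_def by simp
    have "L - (t + a/2) \<le> (L + (t + a/2))/3" using 3 a by (simp add: field_simps)
    then have "min (L - (t + a/2)) ((L + (t + a/2))/3) = L - (t + a/2)" by (rule min_absorb1)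
    moreover have "L - (t + a/2) = a/2" "0 \<le> a/2" using 3 a by (simp_all add: field_simps)
    ultimately show ?thesis by (metis max.absorb2)
  next
    case 4
    then have a: "a = L + t" unfolding a_def by simp
    have "(L + (t + a/2))/3 \<le> L - (t + a/2)" using 4 a by (simp add: field_simps)
    then have "min (L - (t + a/2)) ((L + (t + a/2))/3) = (L + (t + a/2))/3" by (rule min_absorb2)
    moreover have "(L + (t + a/2))/3 = a/2" "0 \<le> a/2" using 4 a by (simp_all add: field_simps)
    ultimately show ?thesis by (metis max.absorb2)
  qed
qed

lemma arith2:
  fixes L t b :: real assumes L0: "0 \<le> L"
  and b_def: "b = max 0 (min (L - t) ((L + t)/3))"
  shows "max 0 (min (L - (t - b)) (L + (t - b))) / 2 = b"
proof -
  consider "L \<le> t" | "t \<le> -L" | "L/2 \<le> t" "t < L" | "-L < t" "t < L/2" by linarith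
  then show ?thesis
  proof cases
    case 1
    then have "b = 0" unfolding b_def by simp
    then show ?thesis using 1 by simp
  next
    case 2
    have "min (L - t) ((L + t) / 3) \<le> 0" using 2 by (simp add: min_le_iff_disj)
    then have "b = 0" unfolding b_def by simp
    then show ?thesis using 2 by simp
  next
    case 3
    have "L - t \<le> (L + t)/3" using 3 by (simp add: field_simps)
    then have "min (L - t) ((L + t)/3) = L - t" by (rule min_absorb1)
    then have b: "b = L - t" unfolding b_def using 3 by simp
    have "L - (t - b) \<le> L + (t - b)" using 3 b by (simp add: field_simps)
    then have "min (L - (t - b)) (L + (t - b)) = L - (t - b)" by (rule min_absorb1)
    moreover have "L - (t - b) = 2 * b" "0 \<le> 2 * b" using 3 b by (simp_all add: field_simps)
    ultimately have "max 0 (min (L - (t - b)) (L + (t - b))) = 2 * b" by (metis max.absorb2)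
    then show ?thesis by simp
  next
    case 4
    have "(L + t)/3 \<le> L - t" using 4 by (simp add: field_simps)
    then have "min (L - t) ((L + t)/3) = (L + t)/3" by (rule min_absorb2)
    then have b: "b = (L + t)/3" unfolding b_def using 4 by simp
    have "L + (t - b) \<le> L - (t - b)" using 4 b by (simp add: field_simps)
    then have "min (L - (t - b)) (L + (t - b)) = L + (t - b)" by (rule min_absorb2)
    moreover have "L + (t - b) = 2 * b" "0 \<le> 2 * b" using 4 b by (simp_all add: field_simps)
    ultimately have "max 0 (min (L - (t - b)) (L + (t - b))) = 2 * b" by (metis max.absorb2)
    then show ?thesis by simp
  qed
qed

lemma hk_hf: "hk n r (hf n r x) = x"
proof -
  define L where "L = Lr n r x"
  define a where "a = max 0 (min (L - x 0) (L + x 0))"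
  have L0: "0 \<le> L" by (simp add: L_def Lr_nonneg)
  have h: "hf n r x = x(0 := x 0 + a/2)" by (simp add: hf_def L_def a_def)
  have hL: "Lr n r (hf n r x) = L" by (simp add: h Lr_upd L_def)
  have h0: "hf n r x 0 = x 0 + a/2" by (simp add: h)
  have "hk n r (hf n r x) = (hf n r x)(0 := x 0 + a/2 - max 0 (min (L - (x 0 + a/2)) ((L + (x 0 + a/2))/3)))"
    unfolding hk_def hL h0 ..
  also have "\<dots> = (hf n r x)(0 := x 0 + a/2 - a/2)"
    by (simp only: arith1[OF L0 a_def])
  also have "\<dots> = x" by (simp add: h)
  finally show ?thesis .
qed

lemma hf_hk: "hf n r (hk n r x) = x"
proof -
  define L where "L = Lr n r x"
  define b where "b = max 0 (min (L - x 0) ((L + x 0)/3))"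
  have L0: "0 \<le> L" by (simp add: L_def Lr_nonneg)
  have h: "hk n r x = x(0 := x 0 - b)" by (simp add: hk_def L_def b_def)
  have hL: "Lr n r (hk n r x) = L" by (simp add: h Lr_upd L_def)
  have h0: "hk n r x 0 = x 0 - b" by (simp add: h)
  have "hf n r (hk n r x) = (hk n r x)(0 := x 0 - b + max 0 (min (L - (x 0 - b)) (L + (x 0 - b))) / 2)"
    unfolding hf_def hL h0 ..
  also have "\<dots> = (hk n r x)(0 := x 0 - b + b)"
    by (simp only: arith2[OF L0 b_def])
  also have "\<dots> = x" by (simp add: h)
  finally show ?thesis .
qed

lemma arith3:
  fixes t L :: real assumes "\<bar>t\<bar> \<le> L"
  shows "\<bar>t + max 0 (min (L - t) (L + t))/2\<bar> \<le> L"
proof (cases "0 \<le> t")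
  case True
  then have "min (L - t) (L + t) = L - t" using assms by (simp add: min_absorb1)
  moreover have "0 \<le> L - t" using assms True by simp
  ultimately have "max 0 (min (L - t) (L + t)) = L - t" by simp
  then show ?thesis using assms True by (simp add: abs_le_iff field_simps)
next
  case False
  then have "min (L - t) (L + t) = L + t" using assms by (simp add: min_absorb2)
  moreover have "0 \<le> L + t" using assms False by simp
  ultimately have "max 0 (min (L - t) (L + t)) = L + t" by simp
  then show ?thesis using assms False by (simp add: abs_le_iff field_simps)
qed

lemma arith4:
  fixes t L :: real assumes "\<bar>t\<bar> \<le> L"
  shows "\<bar>t - max 0 (min (L - t) ((L + t)/3))\<bar> \<le> L"
proof -
  define b where "b = max 0 (min (L - t) ((L + t)/3))"
  have "0 \<le> b" by (simp add: b_def)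
  moreover have "b \<le> (L + t)/3"
  proof -
    have "min (L - t) ((L + t)/3) \<le> (L + t)/3" by (rule min.cobounded2)
    moreover have "0 \<le> (L + t)/3" using assms by (simp add: abs_le_iff)
    ultimately show ?thesis unfolding b_def by (rule max.boundedI[rotated])
  qed
  ultimately have "t - b \<le> L" "-L \<le> t - b" using assms by (simp_all add: abs_le_iff field_simps)
  then show ?thesis unfolding b_def[symmetric] by (simp add: abs_le_iff)
qed

lemma Q_upd: "(\<Sum>i\<in>{1..<n}. (((x::nat\<Rightarrow>real)(0 := v)) i)\<^sup>2) = (\<Sum>i\<in>{1..<n}. (x i)\<^sup>2)"
proof (rule sum.cong)
  fix i assume "i \<in> {1..<n}"
  then have "i \<noteq> 0" by auto
  then show "((x(0 := v)) i)\<^sup>2 = (x i)\<^sup>2" by simp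
qed simp

lemma Lr_sq: 
  assumes "n \<ge> 1" "sqn n x \<le> r\<^sup>2"
  shows "(Lr n r x)\<^sup>2 = r\<^sup>2 - (\<Sum>i\<in>{1..<n}. (x i)\<^sup>2)" "\<bar>x 0\<bar> \<le> Lr n r x"
proof -
  let ?Q = "\<Sum>i\<in>{1..<n}. (x i)\<^sup>2"
  have s: "(x 0)\<^sup>2 + ?Q \<le> r\<^sup>2" using assms sqn_split by metis
  have "0 \<le> (x 0)\<^sup>2" by simp
  then have "0 \<le> r\<^sup>2 - ?Q" using s by linarith
  then have m: "max 0 (r\<^sup>2 - ?Q) = r\<^sup>2 - ?Q" by (rule max_absorb2)
  show "(Lr n r x)\<^sup>2 = r\<^sup>2 - ?Q" unfolding Lr_def m using \<open>0 \<le> r\<^sup>2 - ?Q\<close>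
    by simp
  have "sqrt ((x 0)\<^sup>2) \<le> sqrt (max 0 (r\<^sup>2 - ?Q))" using s m by (simp del: real_sqrt_abs)
  then show "\<bar>x 0\<bar> \<le> Lr n r x" by (simp add: Lr_def)
qed

lemma Lr_less: 
  assumes "n \<ge> 1" "sqn n x < r\<^sup>2"
  shows "\<bar>x 0\<bar> < Lr n r x"
proof -
  let ?Q = "\<Sum>i\<in>{1..<n}. (x i)\<^sup>2"
  have s: "(x 0)\<^sup>2 + ?Q < r\<^sup>2" using assms sqn_split by metis
  have "(x 0)\<^sup>2 < max 0 (r\<^sup>2 - ?Q)" using s by simp
  then have "sqrt ((x 0)\<^sup>2) < sqrt (max 0 (r\<^sup>2 - ?Q))" using real_sqrt_less_mono by blast
  then show ?thesis by (simp add: Lr_def)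
qed

lemma Lr_ge: 
  assumes "n \<ge> 1" "r\<^sup>2 \<le> sqn n x"
  shows "Lr n r x \<le> \<bar>x 0\<bar>"
proof -
  let ?Q = "\<Sum>i\<in>{1..<n}. (x i)\<^sup>2"
  have s: "r\<^sup>2 \<le> (x 0)\<^sup>2 + ?Q" using assms sqn_split by metis
  have "max 0 (r\<^sup>2 - ?Q) \<le> (x 0)\<^sup>2" using s by simp
  then have "sqrt (max 0 (r\<^sup>2 - ?Q)) \<le> sqrt ((x 0)\<^sup>2)" using real_sqrt_le_mono by blast
  then show ?thesis by (simp add: Lr_def)
qed

lemma sqn_upd_le:
  assumes "n \<ge> 1" "sqn n x \<le> r\<^sup>2" "\<bar>v\<bar> \<le> Lr n r x"
  shows "sqn n (x(0 := v)) \<le> r\<^sup>2"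
proof -
  let ?Q = "\<Sum>i\<in>{1..<n}. (x i)\<^sup>2"
  have "sqn n (x(0 := v)) = v\<^sup>2 + ?Q" using sqn_split[OF assms(1), where x="x(0 := v)"] Q_upd[where n=n and x=x and v=v] by simp
  moreover have "v\<^sup>2 \<le> (Lr n r x)\<^sup>2"
    using assms(3) by (metis abs_ge_zero power2_abs power_mono)
  ultimately show ?thesis using Lr_sq[OF assms(1,2)] by simp
qed

lemma upd_top: "n \<ge> 1 \<Longrightarrow> x \<in> topspace (Euclidean_space n) \<Longrightarrow> x(0 := v) \<in> topspace (Euclidean_space n)"
  by (simp add: topspace_Euclidean_space)

lemma hf_top: "n \<ge> 1 \<Longrightarrow> x \<in> topspace (Euclidean_space n) \<Longrightarrow> hf n r x \<in> topspace (Euclidean_space n)"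
  unfolding hf_def by (rule upd_top)

lemma hk_top: "n \<ge> 1 \<Longrightarrow> x \<in> topspace (Euclidean_space n) \<Longrightarrow> hk n r x \<in> topspace (Euclidean_space n)"
  unfolding hk_def by (rule upd_top)

lemma hf_fix: assumes "n \<ge> 1" "r\<^sup>2 \<le> sqn n x" shows "hf n r x = x"
proof -
  have L: "Lr n r x \<le> \<bar>x 0\<bar>" using Lr_ge[OF assms] .
  have "min (Lr n r x - x 0) (Lr n r x + x 0) \<le> 0" using L by (simp add: min_le_iff_disj abs_le_iff) linarith
  then show ?thesis by (simp add: hf_def)
qed

lemma hk_fix: assumes "n \<ge> 1" "r\<^sup>2 \<le> sqn n x" shows "hk n r x = x"
proof -
  have L: "Lr n r x \<le> \<bar>x 0\<bar>" using Lr_ge[OF assms] .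
  have "min (Lr n r x - x 0) ((Lr n r x + x 0)/3) \<le> 0" using L by (simp add: min_le_iff_disj abs_le_iff) linarith
  then show ?thesis by (simp add: hk_def)
qed

lemma hf_in: assumes "n \<ge> 1" "sqn n x \<le> r\<^sup>2" shows "sqn n (hf n r x) \<le> r\<^sup>2"
  unfolding hf_def by (rule sqn_upd_le[OF assms arith3[OF Lr_sq(2)[OF assms]]])

lemma hk_in: assumes "n \<ge> 1" "sqn n x \<le> r\<^sup>2" shows "sqn n (hk n r x) \<le> r\<^sup>2"
  unfolding hk_def by (rule sqn_upd_le[OF assms arith4[OF Lr_sq(2)[OF assms]]])

lemma hf_moves: assumes "n \<ge> 1" "sqn n x < r\<^sup>2" shows "hf n r x \<noteq> x"
proof -
  have L: "\<bar>x 0\<bar> < Lr n r x" using Lr_less[OF assms] .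
  then have pos: "0 < min (Lr n r x - x 0) (Lr n r x + x 0)" by (simp add: abs_less_iff)
  then have "max 0 (min (Lr n r x - x 0) (Lr n r x + x 0)) = min (Lr n r x - x 0) (Lr n r x + x 0)"
    by (simp add: max_absorb2)
  then have "hf n r x 0 = x 0 + min (Lr n r x - x 0) (Lr n r x + x 0) / 2" by (simp add: hf_def)
  moreover define m where "m = min (Lr n r x - x 0) (Lr n r x + x 0)"
  ultimately have "hf n r x 0 = x 0 + m / 2" "0 < m" using pos by simp_all
  then have "hf n r x 0 \<noteq> x 0" by simp
  then show ?thesis by metis
qed

lemma cm_Lr: "continuous_map (Euclidean_space n) euclideanreal (Lr n r)"
  unfolding Lr_def by (intro continuous_intros cm_coord) simp

lemma cm_upd0:
  assumes n: "n \<ge> 1" and F: "continuous_map (Euclidean_space n) euclideanreal F"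
  shows "continuous_map (Euclidean_space n) (Euclidean_space n) (\<lambda>x. x(0 := F x))"
proof -
  have "continuous_map (Euclidean_space n) (Euclidean_space n)
          (\<lambda>x i. if i < n then (if i = 0 then F x else x i) else 0)"
  proof (subst continuous_map_componentwise_Euclidean_space, intro allI impI)
    fix i assume "i < n"
    show "continuous_map (Euclidean_space n) euclideanreal (\<lambda>x. if i = 0 then F x else x i)"
      by (cases "i = 0") (simp_all add: F cm_coord)
  qed
  then show ?thesis
  proof (rule continuous_map_eq)
    fix x assume "x \<in> topspace (Euclidean_space n)"
    then show "(\<lambda>i. if i < n then (if i = 0 then F x else x i) else 0) = x(0 := F x)"
      using n by (auto simp: topspace_Euclidean_space fun_eq_iff)
  qed
qed

lemma cm_hf: "n \<ge> 1 \<Longrightarrow> continuous_map (Euclidean_space n) (Euclidean_space n) (hf n r)"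
  unfolding hf_def[abs_def]
  apply (rule cm_upd0, assumption)
  apply (intro continuous_intros cm_coord cm_Lr)
  apply simp_all
  done

lemma cm_hk: "n \<ge> 1 \<Longrightarrow> continuous_map (Euclidean_space n) (Euclidean_space n) (hk n r)"
  unfolding hk_def[abs_def]
  apply (rule cm_upd0, assumption)
  apply (intro continuous_intros cm_coord cm_Lr)
  apply simp_all
  done

definition glue :: "((nat \<Rightarrow> real) \<Rightarrow> 'a) \<Rightarrow> ('a \<Rightarrow> nat \<Rightarrow> real) \<Rightarrow> (nat \<Rightarrow> real) set
   \<Rightarrow> ((nat \<Rightarrow> real) \<Rightarrow> (nat \<Rightarrow> real)) \<Rightarrow> 'a \<Rightarrow> 'a" where
  "glue e e' A \<psi> p = (if p \<in> e ` A then e (\<psi> (e' p)) else p)"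

lemma emb_inverse:
  assumes emb: "embedding_map (subtopology (Euclidean_space n) (eball n 2)) M e"
  obtains e' where "continuous_map (subtopology M (e ` eball n 2)) (subtopology (Euclidean_space n) (eball n 2)) e'"
    "\<And>x. x \<in> eball n 2 \<Longrightarrow> e' (e x) = x"
proof -
  have "homeomorphic_map (subtopology (Euclidean_space n) (eball n 2)) (subtopology M (e ` eball n 2)) e"
    using emb unfolding embedding_map_def topspace_eball .
  then obtain e' where "homeomorphic_maps (subtopology (Euclidean_space n) (eball n 2)) (subtopology M (e ` eball n 2)) e e'"
    using homeomorphic_map_maps by blast
  then show ?thesis using that unfolding homeomorphic_maps_def topspace_eball by blast
qed

lemma compact_image_eball:
  assumes emb: "embedding_map (subtopology (Euclidean_space n) (eball n 2)) M e"
    and r: "0 \<le> r" "r \<le> 2"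
  shows "compactin M (e ` eball n r)"
proof (rule image_compactin[OF _ emb_cont[OF emb]])
  show "compactin (subtopology (Euclidean_space n) (eball n 2)) (eball n r)"
    using compactin_eball[OF r(1)] eball_mono[OF r] by (simp add: compactin_subtopology)
qed

lemma eball_img_top:
  assumes emb: "embedding_map (subtopology (Euclidean_space n) (eball n 2)) M e"
  shows "e ` eball n 2 \<subseteq> topspace M"
  using continuous_map_image_subset_topspace[OF emb_cont[OF emb]] topspace_eball by metis

lemma glue_cont:
  assumes man: "topological_manifold M n"
    and emb: "embedding_map (subtopology (Euclidean_space n) (eball n 2)) M e"
    and ce': "continuous_map (subtopology M (e ` eball n 2)) (subtopology (Euclidean_space n) (eball n 2)) e'"
    and e'e: "\<And>x. x \<in> eball n 2 \<Longrightarrow> e' (e x) = x"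
    and r: "0 \<le> r" "r \<le> 2"
    and c\<psi>: "continuous_map (Euclidean_space n) (Euclidean_space n) \<psi>"
    and \<psi>in: "\<And>x. x \<in> eball n r \<Longrightarrow> \<psi> x \<in> eball n r"
    and \<psi>fix: "\<And>x. x \<in> topspace (Euclidean_space n) \<Longrightarrow> r\<^sup>2 \<le> sqn n x \<Longrightarrow> \<psi> x = x"
  shows "continuous_map M M (glue e e' (eball n r) \<psi>)"
proof -
  let ?E = "Euclidean_space n"
  let ?A = "e ` eball n r"
  have Haus: "Hausdorff_space M" using man by (simp add: topological_manifold_def)
  have Acl: "closedin M ?A"
    using compactin_imp_closedin[OF Haus compact_image_eball[OF emb r]] .
  have rsub: "eball n r \<subseteq> eball n 2" using eball_mono[OF r] .
  have AB: "?A \<subseteq> e ` eball n 2" using rsub by blast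
  have clA: "M closure_of {p. p \<in> ?A} = ?A" using Acl by (simp add: closure_of_closedin)
  have f: "continuous_map (subtopology M ?A) M (\<lambda>p. e (\<psi> (e' p)))"
  proof -
    have "subtopology M ?A = subtopology (subtopology M (e ` eball n 2)) ?A"
      using AB by (simp add: subtopology_subtopology Int_absorb1)
    then have c1: "continuous_map (subtopology M ?A) (subtopology ?E (eball n 2)) e'"
      using continuous_map_from_subtopology[OF ce'] by metis
    have "e' ` topspace (subtopology M ?A) \<subseteq> eball n r"
    proof
      fix y assume "y \<in> e' ` topspace (subtopology M ?A)"
      then obtain x where "x \<in> eball n r" "y = e' (e x)" by auto
      then show "y \<in> eball n r" using e'e rsub by auto
    qed
    then have "e' \<in> topspace (subtopology M ?A) \<rightarrow> eball n r" by (simp add: image_subset_iff_funcset)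
    then have c2: "continuous_map (subtopology M ?A) (subtopology ?E (eball n r)) e'"
      using c1 by (simp add: continuous_map_in_subtopology)
    have "\<psi> ` topspace (subtopology ?E (eball n r)) \<subseteq> eball n 2"
      using \<psi>in rsub by (auto simp: topspace_eball)
    then have "\<psi> \<in> topspace (subtopology ?E (eball n r)) \<rightarrow> eball n 2" by (simp add: image_subset_iff_funcset)
    then have c3: "continuous_map (subtopology ?E (eball n r)) (subtopology ?E (eball n 2)) \<psi>"
      using continuous_map_from_subtopology[OF c\<psi>] by (simp add: continuous_map_in_subtopology)
    have "continuous_map (subtopology M ?A) M (e \<circ> (\<psi> \<circ> e'))"
      using continuous_map_compose[OF continuous_map_compose[OF c2 c3] emb_cont[OF emb]]
      by (simp add: o_assoc)
    then show ?thesis by (simp add: o_def)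
  qed
  have "continuous_map M M (\<lambda>p. if p \<in> ?A then e (\<psi> (e' p)) else p)"
  proof (rule continuous_map_cases)
    show "continuous_map (subtopology M (M closure_of {p. p \<in> ?A})) M (\<lambda>p. e (\<psi> (e' p)))"
      using f clA by simp
    show "continuous_map (subtopology M (M closure_of {p. p \<notin> ?A})) M (\<lambda>p. p)"
      by (rule continuous_map_from_subtopology) (simp add: continuous_map_id[unfolded id_def])
  next
    fix p assume p: "p \<in> M frontier_of {p. p \<in> ?A}"
    then have pA: "p \<in> ?A" and pint: "p \<notin> M interior_of ?A"
      using clA by (auto simp: frontier_of_def)
    then obtain x where x: "x \<in> eball n r" "p = e x" by auto
    have "\<not> sqn n x < r\<^sup>2"
    proof
      assume "sqn n x < r\<^sup>2"
      then have "x \<in> oball n r" using x by (auto simp: oball_def eball_def)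
      moreover have "e ` oball n r \<subseteq> M interior_of ?A"
      proof (rule interior_of_maximal)
        show "e ` oball n r \<subseteq> ?A" using eball_sqn oball_def by fastforce
        show "openin M (e ` oball n r)" using open_image_oball[OF man emb r] .
      qed
      ultimately show False using pint x by blast
    qed
    then have "\<psi> x = x" using \<psi>fix x by (auto simp: eball_def)
    then show "e (\<psi> (e' p)) = p" using x e'e rsub by auto
  qed
  then show ?thesis by (simp add: glue_def[abs_def])
qed

lemma glue_homeo:
  assumes man: "topological_manifold M n"
    and emb: "embedding_map (subtopology (Euclidean_space n) (eball n 2)) M e"
    and ce': "continuous_map (subtopology M (e ` eball n 2)) (subtopology (Euclidean_space n) (eball n 2)) e'"
    and e'e: "\<And>x. x \<in> eball n 2 \<Longrightarrow> e' (e x) = x"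
    and r: "0 \<le> r" "r \<le> 2"
    and c\<psi>: "continuous_map (Euclidean_space n) (Euclidean_space n) \<psi>"
    and \<psi>in: "\<And>x. x \<in> eball n r \<Longrightarrow> \<psi> x \<in> eball n r"
    and \<psi>fix: "\<And>x. x \<in> topspace (Euclidean_space n) \<Longrightarrow> r\<^sup>2 \<le> sqn n x \<Longrightarrow> \<psi> x = x"
    and c\<kappa>: "continuous_map (Euclidean_space n) (Euclidean_space n) \<kappa>"
    and \<kappa>in: "\<And>x. x \<in> eball n r \<Longrightarrow> \<kappa> x \<in> eball n r"
    and \<kappa>fix: "\<And>x. x \<in> topspace (Euclidean_space n) \<Longrightarrow> r\<^sup>2 \<le> sqn n x \<Longrightarrow> \<kappa> x = x"
    and inv1: "\<And>x. \<kappa> (\<psi> x) = x" and inv2: "\<And>x. \<psi> (\<kappa> x) = x"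
  shows "glue e e' (eball n r) \<psi> \<in> Homeo M"
proof -
  let ?g = "glue e e' (eball n r) \<psi>"
  let ?k = "glue e e' (eball n r) \<kappa>"
  have cg: "continuous_map M M ?g" by (rule glue_cont[OF man emb ce' e'e r c\<psi> \<psi>in \<psi>fix])
  have ck: "continuous_map M M ?k" by (rule glue_cont[OF man emb ce' e'e r c\<kappa> \<kappa>in \<kappa>fix])
  have rsub: "eball n r \<subseteq> eball n 2" using eball_mono[OF r] .
  have AM: "e ` eball n r \<subseteq> topspace M" using eball_img_top[OF emb] rsub by blast
  have kg: "?k (?g p) = p" for p
  proof (cases "p \<in> e ` eball n r")
    case True
    then obtain x where x: "x \<in> eball n r" "p = e x" by auto
    have gp: "?g p = e (\<psi> x)" using x True e'e rsub by (auto simp: glue_def)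
    have "\<psi> x \<in> eball n r" using \<psi>in x by blast
    then show ?thesis using gp x e'e rsub inv1 by (auto simp: glue_def)
  next
    case False
    then show ?thesis by (simp add: glue_def)
  qed
  have gk: "?g (?k p) = p" for p
  proof (cases "p \<in> e ` eball n r")
    case True
    then obtain x where x: "x \<in> eball n r" "p = e x" by auto
    have gp: "?k p = e (\<kappa> x)" using x True e'e rsub by (auto simp: glue_def)
    have "\<kappa> x \<in> eball n r" using \<kappa>in x by blast
    then show ?thesis using gp x e'e rsub inv2 by (auto simp: glue_def)
  next
    case False
    then show ?thesis by (simp add: glue_def)
  qed
  have "homeomorphic_maps M M ?g ?k"
    unfolding homeomorphic_maps_def using cg ck kg gk by blast
  then have "homeomorphic_map M M ?g" using homeomorphic_map_maps by blast
  moreover have "\<forall>x. x \<notin> topspace M \<longrightarrow> ?g x = x" using AM by (auto simp: glue_def)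
  ultimately show ?thesis by (simp add: Homeo_def)
qed

lemma choose_r:
  assumes emb: "embedding_map (subtopology (Euclidean_space n) (eball n 2)) M e"
    and U: "openin M U" and sub: "e ` eball n 1 \<subseteq> U"
  shows "\<exists>r. 1 < r \<and> r < 2 \<and> e ` eball n r \<subseteq> U"
proof -
  let ?X = "subtopology (Euclidean_space n) (eball n 2)"
  define S where "S = {x \<in> topspace ?X. e x \<in> topspace M - U}"
  have ce: "continuous_map ?X M e" using emb_cont[OF emb] .
  have "closedin ?X S" unfolding S_def
    by (rule closedin_continuous_map_preimage[OF ce]) (use U in blast)
  moreover have "compact_space ?X"
    using compactin_eball[of 2 n] by (simp add: compact_space_subtopology)
  ultimately have cS: "compactin ?X S" by (simp add: closedin_compact_space)
  have img: "e ` eball n 2 \<subseteq> topspace M" using eball_img_top[OF emb] .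
  show ?thesis
  proof (cases "S = {}")
    case True
    show ?thesis
    proof (intro exI conjI)
      show "e ` eball n (3/2) \<subseteq> U"
      proof
        fix p assume "p \<in> e ` eball n (3/2)"
        then obtain x where x: "x \<in> eball n (3/2)" "p = e x" by auto
        have "x \<in> eball n 2" using x eball_mono[of "3/2" 2 n] by auto
        then show "p \<in> U" using True img x unfolding S_def topspace_eball by blast
      qed
    qed auto
  next
    case False
    have "continuous_map ?X euclideanreal (sqn n)"
      using continuous_map_from_subtopology[OF cm_sqn] .
    then have "compactin euclideanreal (sqn n ` S)" using image_compactin[OF cS] by blast
    then have "compact (sqn n ` S)" by simp
    moreover have "sqn n ` S \<noteq> {}" using False by blast
    ultimately obtain m where m: "m \<in> sqn n ` S" "\<And>y. y \<in> sqn n ` S \<Longrightarrow> m \<le> y"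
      using compact_attains_inf by metis
    then obtain x0 where x0: "x0 \<in> S" "m = sqn n x0" by blast
    have m1: "1 < m"
    proof (rule ccontr)
      assume "\<not> 1 < m"
      then have "x0 \<in> eball n 1" using x0 by (auto simp: S_def eball_sqn topspace_eball)
      then show False using x0 sub by (auto simp: S_def)
    qed
    define \<rho> where "\<rho> = min (9/4) ((1 + m)/2)"
    have "(1 + m)/2 < m" "1 < (1 + m)/2" using m1 by (simp_all add: field_simps)
    then have \<rho>: "1 < \<rho>" "\<rho> < m" "\<rho> < 4" unfolding \<rho>_def
      by (simp_all add: min.strict_coboundedI2 min_less_iff_disj)
    define r where "r = sqrt \<rho>"
    have r2: "r\<^sup>2 = \<rho>" using \<rho> by (simp add: r_def)
    have "1 < r" using \<rho> by (simp add: r_def)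
    moreover have "r < 2"
    proof -
      have "sqrt \<rho> < sqrt 4" using \<rho> real_sqrt_less_mono by blast
      then show ?thesis by (simp add: r_def)
    qed
    moreover have "e ` eball n r \<subseteq> U"
    proof
      fix p assume "p \<in> e ` eball n r"
      then obtain x where x: "x \<in> eball n r" "p = e x" by auto
      have x2: "x \<in> eball n 2" using x eball_mono[of r 2 n] \<open>1 < r\<close> \<open>r < 2\<close> by auto
      have "sqn n x < m" using x r2 \<rho> by (auto simp: eball_sqn)
      then have "x \<notin> S" using m(2) by force
      then show "p \<in> U" using x2 img x unfolding S_def topspace_eball by blast
    qed
    ultimately show ?thesis by blast
  qed
qed

lemma loc_sep:
  assumes cM: "compact_space M" and HM: "Hausdorff_space M"
    and ch: "continuous_map M M h" and xM: "x \<in> topspace M" and ne: "x \<noteq> h x"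
  shows "\<exists>V Q. openin M V \<and> x \<in> V \<and> openin M Q \<and> h ` (M closure_of V) \<subseteq> Q
                  \<and> Q \<inter> M closure_of V = {}"
proof -
  have reg: "regular_space M" using compact_Hausdorff_imp_regular_space[OF cM HM] .
  have hxM: "h x \<in> topspace M" using continuous_map_image_subset_topspace[OF ch] xM by blast
  have "\<exists>P Q. openin M P \<and> openin M Q \<and> x \<in> P \<and> h x \<in> Q \<and> disjnt P Q"
    using HM[unfolded Hausdorff_space_def, rule_format, of x "h x"] xM hxM ne by simp
  then obtain P Q where PQ: "openin M P" "openin M Q" "x \<in> P" "h x \<in> Q" "disjnt P Q"
    by auto
  define P' where "P' = P \<inter> {y \<in> topspace M. h y \<in> Q}"
  have oP': "openin M P'" unfolding P'_def
    using openin_continuous_map_preimage[OF ch PQ(2)] PQ(1) by blast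
  have xP': "x \<in> P'" using PQ xM by (simp add: P'_def)
  have "closedin M (topspace M - P')" by (rule closedin_diff[OF closedin_topspace oP'])
  moreover have "x \<in> topspace M - (topspace M - P')" using xP' xM by blast
  ultimately have "\<exists>U V. openin M U \<and> openin M V \<and> x \<in> U \<and> topspace M - P' \<subseteq> V \<and> disjnt U V"
    using reg[unfolded regular_space_def, rule_format, of "topspace M - P'" x] by simp
  then obtain U V where UV: "openin M U" "openin M V" "x \<in> U" "topspace M - P' \<subseteq> V" "disjnt U V"
    by auto
  have "U \<subseteq> topspace M - V" using UV openin_subset[OF UV(1)] by (auto simp: disjnt_def)
  moreover have "closedin M (topspace M - V)" by (rule closedin_diff[OF closedin_topspace UV(2)])
  ultimately have "M closure_of U \<subseteq> topspace M - V" by (rule closure_of_minimal)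
  also have "\<dots> \<subseteq> P'" using UV(4) by blast
  finally have clP: "M closure_of U \<subseteq> P'" .
  show ?thesis
  proof (intro exI conjI)
    show "openin M U" "x \<in> U" "openin M Q" by (fact UV(1), fact UV(3), fact PQ(2))
    show "h ` (M closure_of U) \<subseteq> Q" using clP by (auto simp: P'_def)
    show "Q \<inter> M closure_of U = {}" using clP PQ(5) by (auto simp: P'_def disjnt_def)
  qed
qed

lemma approx_moves:
  assumes cM: "compact_space M" and HM: "Hausdorff_space M"
    and ch: "continuous_map M M h" and K: "compactin M K" and mv: "\<And>x. x \<in> K \<Longrightarrow> h x \<noteq> x"
    and cd: "co_dense M A B" and hB: "h \<in> B"
  shows "\<exists>g\<in>A. \<forall>x\<in>K. g x \<noteq> x"
proof -
  have KM: "K \<subseteq> topspace M" using K compactin_subset_topspace by blast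
  have "\<forall>x\<in>K. \<exists>V Q. openin M V \<and> x \<in> V \<and> openin M Q \<and> h ` (M closure_of V) \<subseteq> Q
                  \<and> Q \<inter> M closure_of V = {}"
  proof
    fix x assume xK: "x \<in> K"
    have "x \<noteq> h x" using mv[OF xK] by (rule not_sym)
    moreover have "x \<in> topspace M" using xK KM by blast
    ultimately show "\<exists>V Q. openin M V \<and> x \<in> V \<and> openin M Q \<and> h ` (M closure_of V) \<subseteq> Q
                  \<and> Q \<inter> M closure_of V = {}" using loc_sep[OF cM HM ch] by blast
  qed
  then have "\<exists>V. \<forall>x\<in>K. \<exists>Q. openin M (V x) \<and> x \<in> V x \<and> openin M Q \<and> h ` (M closure_of V x) \<subseteq> Q
                  \<and> Q \<inter> M closure_of V x = {}" by (rule bchoice)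
  then obtain V where "\<forall>x\<in>K. \<exists>Q. openin M (V x) \<and> x \<in> V x \<and> openin M Q \<and> h ` (M closure_of V x) \<subseteq> Q
                  \<and> Q \<inter> M closure_of V x = {}" by (elim exE)
  then have "\<exists>Q. \<forall>x\<in>K. openin M (V x) \<and> x \<in> V x \<and> openin M (Q x) \<and> h ` (M closure_of V x) \<subseteq> Q x
                  \<and> Q x \<inter> M closure_of V x = {}" by (rule bchoice)
  then obtain Q where VQ0: "\<forall>x\<in>K. openin M (V x) \<and> x \<in> V x \<and> openin M (Q x) \<and> h ` (M closure_of V x) \<subseteq> Q x
                  \<and> Q x \<inter> M closure_of V x = {}" by (elim exE)
  have VQ: "openin M (V x)" "x \<in> V x" "openin M (Q x)"
        "h ` (M closure_of V x) \<subseteq> Q x" "Q x \<inter> M closure_of V x = {}" if "x \<in> K" for x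
    using VQ0 that by auto
  have "\<forall>U\<in>V ` K. openin M U" using VQ(1) by blast
  moreover have "K \<subseteq> \<Union>(V ` K)" using VQ(2) by blast
  ultimately have "\<exists>F. finite F \<and> F \<subseteq> V ` K \<and> K \<subseteq> \<Union>F"
    using conjunct2[OF K[unfolded compactin_def], rule_format, of "V ` K"] by simp
  then obtain F where F: "finite F" "F \<subseteq> V ` K" "K \<subseteq> \<Union>F" by auto
  obtain X0 where X0: "X0 \<subseteq> K" "finite X0" "F = V ` X0"
    using finite_subset_image[OF F(1) F(2)] by auto
  define Fm where "Fm = (\<lambda>x. (M closure_of V x, Q x)) ` X0"
  have "finite Fm" using X0 by (simp add: Fm_def)
  moreover have "\<forall>(C, Ob)\<in>Fm. compactin M C \<and> openin M Ob \<and> h ` C \<subseteq> Ob"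
  proof (rule ballI)
    fix p assume "p \<in> Fm"
    then obtain x where x: "x \<in> X0" "p = (M closure_of V x, Q x)" unfolding Fm_def by blast
    then have xK: "x \<in> K" using X0 by blast
    have "compactin M (M closure_of V x)" using cM by (simp add: closedin_compact_space)
    then show "case p of (C, Ob) \<Rightarrow> compactin M C \<and> openin M Ob \<and> h ` C \<subseteq> Ob"
      using VQ[OF xK] x(2) by simp
  qed
  ultimately have "\<exists>g\<in>A. \<forall>(C, Ob)\<in>Fm. g ` C \<subseteq> Ob"
    using cd[unfolded co_dense_def, rule_format, OF hB] by blast
  then obtain g where g: "g \<in> A" "\<forall>(C, Ob)\<in>Fm. g ` C \<subseteq> Ob" by auto
  show ?thesis
  proof (intro bexI[OF _ g(1)] ballI)
    fix y assume yK: "y \<in> K"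
    then have "y \<in> \<Union>(V ` X0)" using F(3) unfolding X0(3) by blast
    then obtain x where x: "x \<in> X0" "y \<in> V x" by blast
    have xK: "x \<in> K" using x(1) X0(1) by blast
    have "V x \<subseteq> topspace M" using openin_subset[OF VQ(1)[OF xK]] .
    then have ycl: "y \<in> M closure_of V x" using closure_of_subset x(2) by blast
    have mem: "(M closure_of V x, Q x) \<in> Fm" using x(1) by (simp add: Fm_def)
    have gsub: "g ` (M closure_of V x) \<subseteq> Q x" using bspec[OF g(2) mem] by simp
    have gyQ: "g y \<in> Q x" by (rule subsetD[OF gsub imageI[OF ycl]])
    have disj: "Q x \<inter> M closure_of V x = {}" using VQ(5)[OF xK] .
    show "g y \<noteq> y"
    proof
      assume "g y = y"
      then have "y \<in> Q x" using gyQ by simp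
      then have "y \<in> Q x \<inter> M closure_of V x" using ycl by (rule IntI)
      then show False using disj by simp
    qed
  qed
qed

theorem lemma2p3:
  fixes M :: "'a topology" and n :: nat and G :: "('a \<Rightarrow> 'a) set" and U V :: "'a set"
  assumes "topological_manifold M n" and "n \<ge> 1"
    and "compact_space M" and "connected_space M"
    and "homeo_subgroup M G" and "locally_approximating M n G"
    and "regular_open M U"
    and "\<exists>C. chart_domain M n C \<and> compactly_contained M n U C"
    and "V \<subseteq> U" and "compactly_contained M n V U"
  shows "\<exists>W\<in>D_set M G. W \<subseteq> U \<and> compactly_contained M n V W"
proof -
  note man = assms(1) and n1 = assms(2) and cM = assms(3) and la = assms(6)
    and reg = assms(7) and chU = assms(8) and ccVU = assms(10)
  have Haus: "Hausdorff_space M" using man by (simp add: topological_manifold_def)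
  have Uo: "openin M U" using reg by (simp add: regular_open_def)
  have intU: "M interior_of U = U" using Uo by (rule interior_of_openin)
  have regU: "M interior_of (M closure_of U) = U" using reg by (simp add: regular_open_def)
  obtain D where D: "collared_ball M n D" "V \<subseteq> D" "D \<subseteq> M interior_of U"
    using ccVU unfolding compactly_contained_def by blast
  obtain e where emb: "embedding_map (subtopology (Euclidean_space n) (eball n 2)) M e"
    and De: "D = e ` eball n 1"
    using D(1) unfolding collared_ball_def by blast
  obtain C D0 where C: "chart_domain M n C" "D0 \<subseteq> M interior_of C" "U \<subseteq> D0"
    using chU unfolding compactly_contained_def by blast
  have "D0 \<subseteq> C" using C(2) interior_of_subset[of M C] by (rule order_trans)
  then have UC: "U \<subseteq> C" using C(3) by simp
  have e1U: "e ` eball n 1 \<subseteq> U" using D(3) De intU by simp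
  obtain r where r: "1 < r" "r < 2" "e ` eball n r \<subseteq> U"
    using choose_r[OF emb Uo e1U] by blast
  have r0: "0 \<le> r" "r \<le> 2" using r by simp_all
  obtain e' where ce': "continuous_map (subtopology M (e ` eball n 2)) (subtopology (Euclidean_space n) (eball n 2)) e'"
    and e'e: "\<And>x. x \<in> eball n 2 \<Longrightarrow> e' (e x) = x"
    using emb_inverse[OF emb] by blast
  have ie: "inj_on e (eball n 2)" using emb_inj[OF emb] .
  define s where "s = (1 + r) / 2"
  have s: "1 < s" "s < r" using r by (simp_all add: s_def)
  have s0: "0 \<le> s" "s \<le> 2" using s r by simp_all
  define Om where "Om = e ` oball n r"
  have Oom: "openin M Om" unfolding Om_def using open_image_oball[OF man emb r0] .
  have OA: "Om \<subseteq> e ` eball n r" unfolding Om_def by (rule image_mono[OF oball_sub[OF r0(1) order_refl]])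
  have Acl: "closedin M (e ` eball n r)"
    using compactin_imp_closedin[OF Haus compact_image_eball[OF emb r0]] .
  have clO: "M closure_of Om \<subseteq> e ` eball n r" using closure_of_minimal[OF OA Acl] .
  have A2: "e ` eball n r \<subseteq> e ` oball n 2" by (rule image_mono[OF eball_oball[OF r0(1) r(2)]])
  have bd: "e ` oball n 2 \<inter> mboundary M n = {}" using image_oball_boundary[OF man n1 emb] .
  have "co_dense M (rel_supp M G Om) (rel_supp M (Homeo M) Om)"
  proof -
    have "openin M Om \<and> compactin M (M closure_of Om) \<and> in_single_chart M n (M closure_of Om)
          \<and> M closure_of Om \<inter> mboundary M n = {}"
    proof (intro conjI)
      show "openin M Om" by (fact Oom)
      show "compactin M (M closure_of Om)" using cM by (simp add: closedin_compact_space)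
      show "in_single_chart M n (M closure_of Om)"
        unfolding in_single_chart_def using C(1) order_trans[OF clO order_trans[OF r(3) UC]] by blast
      have "M closure_of Om \<subseteq> e ` oball n 2" by (rule order_trans[OF clO A2])
      then show "M closure_of Om \<inter> mboundary M n = {}" using bd by blast
    qed
    then show ?thesis using la[unfolded locally_approximating_def, THEN conjunct1, rule_format] by blast
  qed
  note cd = this
  define h where "h = glue e e' (eball n r) (hf n r)"
  have hin: "hf n r x \<in> eball n r" if "x \<in> eball n r" for x
    using that hf_top[OF n1] hf_in[OF n1] by (auto simp: eball_sqn)
  have kin: "hk n r x \<in> eball n r" if "x \<in> eball n r" for x
    using that hk_top[OF n1] hk_in[OF n1] by (auto simp: eball_sqn)
  have hH: "h \<in> Homeo M" unfolding h_def
  proof (rule glue_homeo[OF man emb ce' e'e r0 cm_hf[OF n1] hin _ cm_hk[OF n1] kin])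
    show "hf n r x = x" if "r\<^sup>2 \<le> sqn n x" for x using hf_fix[OF n1 that] .
    show "hk n r x = x" if "r\<^sup>2 \<le> sqn n x" for x using hk_fix[OF n1 that] .
    show "hk n r (hf n r x) = x" for x by (rule hk_hf)
    show "hf n r (hk n r x) = x" for x by (rule hf_hk)
  qed
  have rsub: "eball n r \<subseteq> eball n 2" using eball_mono[OF r0] .
  have hA: "h (e x) = e (hf n r x)" if "x \<in> eball n r" for x
    using that e'e rsub by (auto simp: h_def glue_def)
  have hrel: "h \<in> rel_supp M (Homeo M) Om"
    unfolding rel_supp_def
  proof (intro CollectI conjI ballI)
    show "h \<in> Homeo M" by (fact hH)
    fix p assume p: "p \<in> topspace M - Om"
    show "h p = p"
    proof (cases "p \<in> e ` eball n r")
      case True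
      then obtain x where x: "x \<in> eball n r" "p = e x" by auto
      have "x \<notin> oball n r" using p x by (auto simp: Om_def)
      then have "r\<^sup>2 \<le> sqn n x" using x by (auto simp: oball_def eball_sqn)
      then have "hf n r x = x" using hf_fix[OF n1] by blast
      then show ?thesis using hA x by simp
    next
      case False
      then show ?thesis by (simp add: h_def glue_def)
    qed
  qed
  define K where "K = e ` eball n s"
  have cK: "compactin M K" unfolding K_def using compact_image_eball[OF emb s0] .
  have ssub: "eball n s \<subseteq> eball n r" using eball_mono[of s r n] s s0 by simp
  have hmv: "h p \<noteq> p" if "p \<in> K" for p
  proof -
    have "p \<in> e ` eball n s" using that unfolding K_def .
    then obtain x where x: "x \<in> eball n s" "p = e x" by auto
    have xr: "x \<in> eball n r" using x ssub by blast
    have "s\<^sup>2 < r\<^sup>2" using s s0 by (simp add: power_strict_mono)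
    then have "sqn n x < r\<^sup>2" using x by (auto simp: eball_sqn)
    then have ne: "hf n r x \<noteq> x" using hf_moves[OF n1] by blast
    have "hf n r x \<in> eball n 2" "x \<in> eball n 2" using hin[OF xr] xr rsub by blast+
    then have "e (hf n r x) \<noteq> e x" using ne ie by (meson inj_onD)
    then show ?thesis using hA[OF xr] x by simp
  qed
  have ch: "continuous_map M M h" using hH by (simp add: Homeo_def homeomorphic_imp_continuous_map)
  obtain g where g: "g \<in> rel_supp M G Om" "\<forall>p\<in>K. g p \<noteq> p"
    using approx_moves[OF cM Haus ch cK hmv cd hrel] by blast
  have gG: "g \<in> G" and gfix: "\<And>x. x \<in> topspace M - Om \<Longrightarrow> g x = x"
    using g(1) by (auto simp: rel_supp_def)
  define S where "S = {x \<in> topspace M. g x \<noteq> x}"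
  define W where "W = ext_supp M g"
  have WS: "W = M interior_of (M closure_of S)" by (simp add: W_def S_def ext_supp_def)
  have WD: "W \<in> D_set M G" using gG by (simp add: W_def D_set_def)
  have SO: "S \<subseteq> Om"
  proof
    fix x assume x: "x \<in> S"
    show "x \<in> Om"
    proof (rule ccontr)
      assume "x \<notin> Om"
      then have "g x = x" using x gfix[of x] by (simp add: S_def)
      then show False using x by (simp add: S_def)
    qed
  qed
  have SU: "S \<subseteq> U" by (rule order_trans[OF SO order_trans[OF OA r(3)]])
  have WU: "W \<subseteq> U"
  proof -
    have "M closure_of S \<subseteq> M closure_of U" using SU by (rule closure_of_mono)
    then have "M interior_of (M closure_of S) \<subseteq> M interior_of (M closure_of U)" by (rule interior_of_mono)
    then show ?thesis using WS regU by simp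
  qed
  have KM: "K \<subseteq> topspace M" using cK by (rule compactin_subset_topspace)
  have KS: "K \<subseteq> S"
  proof
    fix p assume p: "p \<in> K"
    then have "p \<in> topspace M" "g p \<noteq> p" using KM g(2) by auto
    then show "p \<in> S" by (simp add: S_def)
  qed
  have "S \<subseteq> topspace M" by (auto simp: S_def)
  then have Scl: "S \<subseteq> M closure_of S" by (rule closure_of_subset)
  have oK: "e ` oball n s \<subseteq> K" unfolding K_def by (rule image_mono[OF oball_sub[OF s0(1) order_refl]])
  have "e ` oball n s \<subseteq> M closure_of S" by (rule order_trans[OF oK order_trans[OF KS Scl]])
  moreover have "openin M (e ` oball n s)" using open_image_oball[OF man emb s0] .
  ultimately have oW: "e ` oball n s \<subseteq> W" unfolding WS by (rule interior_of_maximal)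
  have Do: "D \<subseteq> e ` oball n s" unfolding De by (rule image_mono[OF eball_oball[OF _ s(1)]]) simp
  have iW: "M interior_of W = W" unfolding WS by (simp add: interior_of_openin)
  have "D \<subseteq> M interior_of W" unfolding iW by (rule order_trans[OF Do oW])
  then have cc: "compactly_contained M n V W"
    unfolding compactly_contained_def using D(1) D(2) by blast
  show ?thesis
  proof (rule bexI[where x = W])
    show "W \<subseteq> U \<and> compactly_contained M n V W" using WU cc by (rule conjI)
    show "W \<in> D_set M G" by (fact WD)
  qed
qed

end
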